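(* Let $\mathcal{D}$ be a vector lattice of bounded real functions on a nonempty set $X$ with the Stone property, and let $(\mathcal{E},\mathcal{D})$ be a bilinear form on which the unit contraction operates. Then $K(f):=\inf\{\mathcal{E}(f,\varphi):\varphi\in E_f\}$, $f\in\mathcal{D}_0^+$, defines a functional on the cone $\mathcal{D}_0^+$ which is additive, positively homogeneous and takes values in $[0,\infty)$.
   Context: Stone property: $f\in\mathcal{D}\Rightarrow f\wedge1\in\mathcal{D}$. Unit contraction $T_1(x)=\max(x,0)\wedge1$; it operates on $(\mathcal{E},\mathcal{D})$ if $\mathcal{E}(T_1(f))\le\mathcal{E}(f)$ for all $f\in\mathcal{D}$. A bilinear form is a symmetric nonnegative definite bilinear map, $\mathcal{E}(f)=\mathcal{E}(f,f)$. For $f\in\mathcal{D}^+$ (nonnegative elements), $E_f:=\{\varphi\in\mathcal{D}:\mathbf 1_{\{f>0\}}\le\varphi\le\mathbf 1\}$; $\mathcal{D}_0^+:=\{f\in\mathcal{D}^+:E_f\ne\emptyset\}$ and $\mathcal{D}_0$ the linear span of $\mathcal{D}_0^+$. *)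

theory Defs
  imports Main "HOL-Library.Indicator_Function"
begin

text \<open>Functions on the nonempty set X are modelled as functions on the (nonempty) type 'a.\<close>

definition vector_lattice_of_bounded_functions :: "('a \<Rightarrow> real) set \<Rightarrow> bool" where
  "vector_lattice_of_bounded_functions D \<longleftrightarrow>
     (\<lambda>x. 0) \<in> D \<and>
     (\<forall>f\<in>D. \<forall>g\<in>D. (\<lambda>x. f x + g x) \<in> D) \<and>
     (\<forall>f\<in>D. \<forall>c::real. (\<lambda>x. c * f x) \<in> D) \<and>
     (\<forall>f\<in>D. \<forall>g\<in>D. (\<lambda>x. max (f x) (g x)) \<in> D) \<and>
     (\<forall>f\<in>D. \<exists>B. \<forall>x. \<bar>f x\<bar> \<le> B)"

definition stone_property :: "('a \<Rightarrow> real) set \<Rightarrow> bool" where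
  "stone_property D \<longleftrightarrow> (\<forall>f\<in>D. (\<lambda>x. min (f x) 1) \<in> D)"

definition bilinear_form_on ::
  "('a \<Rightarrow> real) set \<Rightarrow> (('a \<Rightarrow> real) \<Rightarrow> ('a \<Rightarrow> real) \<Rightarrow> real) \<Rightarrow> bool" where
  "bilinear_form_on D E \<longleftrightarrow>
     (\<forall>f\<in>D. \<forall>g\<in>D. E f g = E g f) \<and>
     (\<forall>f\<in>D. \<forall>g\<in>D. \<forall>h\<in>D. E (\<lambda>x. f x + g x) h = E f h + E g h) \<and>
     (\<forall>f\<in>D. \<forall>h\<in>D. \<forall>c::real. E (\<lambda>x. c * f x) h = c * E f h) \<and>
     (\<forall>f\<in>D. E f f \<ge> 0)"

definition unit_contraction :: "real \<Rightarrow> real" where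
  "unit_contraction t = min (max t 0) 1"

definition unit_contraction_operates ::
  "('a \<Rightarrow> real) set \<Rightarrow> (('a \<Rightarrow> real) \<Rightarrow> ('a \<Rightarrow> real) \<Rightarrow> real) \<Rightarrow> bool" where
  "unit_contraction_operates D E \<longleftrightarrow>
     (\<forall>f\<in>D. E (\<lambda>x. unit_contraction (f x)) (\<lambda>x. unit_contraction (f x)) \<le> E f f)"

definition Dplus :: "('a \<Rightarrow> real) set \<Rightarrow> ('a \<Rightarrow> real) set" where
  "Dplus D = {f\<in>D. \<forall>x. 0 \<le> f x}"

definition Eset :: "('a \<Rightarrow> real) set \<Rightarrow> ('a \<Rightarrow> real) \<Rightarrow> ('a \<Rightarrow> real) set" where
  "Eset D f = {\<phi>\<in>D. \<forall>x. indicator {y. f y > 0} x \<le> \<phi> x \<and> \<phi> x \<le> 1}"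

definition D0plus :: "('a \<Rightarrow> real) set \<Rightarrow> ('a \<Rightarrow> real) set" where
  "D0plus D = {f\<in>Dplus D. Eset D f \<noteq> {}}"

definition Kfun ::
  "('a \<Rightarrow> real) set \<Rightarrow> (('a \<Rightarrow> real) \<Rightarrow> ('a \<Rightarrow> real) \<Rightarrow> real) \<Rightarrow> ('a \<Rightarrow> real) \<Rightarrow> real" where
  "Kfun D E f = Inf ((\<lambda>\<phi>. E f \<phi>) ` Eset D f)"

end

theory Submission
  imports Defs
begin

lemma bl:
  assumes "bilinear_form_on D E"
  shows "\<And>f g. f\<in>D \<Longrightarrow> g\<in>D \<Longrightarrow> E f g = E g f"
    and "\<And>f g h. f\<in>D \<Longrightarrow> g\<in>D \<Longrightarrow> h\<in>D \<Longrightarrow> E (\<lambda>x. f x + g x) h = E f h + E g h"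
    and "\<And>f h c. f\<in>D \<Longrightarrow> h\<in>D \<Longrightarrow> E (\<lambda>x. c * f x) h = c * E f h"
    and "\<And>f. f\<in>D \<Longrightarrow> E f f \<ge> 0"
  using assms unfolding bilinear_form_on_def by blast+

lemma vl:
  assumes "vector_lattice_of_bounded_functions D"
  shows "\<And>f g. f\<in>D \<Longrightarrow> g\<in>D \<Longrightarrow> (\<lambda>x. f x + g x) \<in> D"
    and "\<And>f c. f\<in>D \<Longrightarrow> (\<lambda>x. c * f x) \<in> D"
    and "\<And>f g. f\<in>D \<Longrightarrow> g\<in>D \<Longrightarrow> (\<lambda>x. max (f x) (g x)) \<in> D"
    and "\<And>f. f\<in>D \<Longrightarrow> \<exists>B. \<forall>x. \<bar>f x\<bar> \<le> B"
  using assms unfolding vector_lattice_of_bounded_functions_def by blast+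

lemma vl_lin:
  assumes "vector_lattice_of_bounded_functions D" "u \<in> D" "v \<in> D"
  shows "(\<lambda>x. u x + t * v x) \<in> D"
proof -
  have "(\<lambda>x. t * v x) \<in> D" using vl(2)[OF assms(1) assms(3)] .
  from vl(1)[OF assms(1) assms(2) this] show ?thesis by simp
qed

lemma quad:
  assumes B: "bilinear_form_on D E" and V: "vector_lattice_of_bounded_functions D"
    and u: "u \<in> D" and v: "v \<in> D"
  shows "E (\<lambda>x. u x + t * v x) (\<lambda>x. u x + t * v x) = E u u + 2*t*E u v + t^2*E v v"
proof -
  define tv where "tv = (\<lambda>x. t * v x)"
  have tv: "tv \<in> D" unfolding tv_def using vl(2)[OF V v] .
  define w where "w = (\<lambda>x. u x + tv x)"
  have w: "w \<in> D" unfolding w_def using vl(1)[OF V u tv] .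
  have eq: "(\<lambda>x. u x + t * v x) = w" unfolding w_def tv_def by simp
  have "E w w = E u w + E tv w" unfolding w_def[of ] using bl(2)[OF B u tv w] by (simp add: w_def)
  also have "E u w = E w u" using bl(1)[OF B u w] .
  also have "E w u = E u u + E tv u" unfolding w_def using bl(2)[OF B u tv u] by simp
  also have "E tv w = E w tv" using bl(1)[OF B tv w] .
  also have "E w tv = E u tv + E tv tv" unfolding w_def using bl(2)[OF B u tv tv] by simp
  also have "E tv u = t * E v u" unfolding tv_def using bl(3)[OF B v u] .
  also have "E tv tv = t * E v tv"
  proof -
    have "E (\<lambda>x. t * v x) tv = t * E v tv" using bl(3)[OF B v tv] .
    thus ?thesis by (simp add: tv_def)
  qed
  also have "E v tv = E tv v" using bl(1)[OF B v tv] .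
  also have "E tv v = t * E v v" unfolding tv_def using bl(3)[OF B v v] .
  also have "E u tv = E tv u" using bl(1)[OF B u tv] .
  also have "E tv u = t * E v u" unfolding tv_def using bl(3)[OF B v u] .
  also have "E v u = E u v" using bl(1)[OF B v u] .
  finally show ?thesis unfolding eq by (simp add: power2_eq_square algebra_simps)
qed

lemma real_aux:
  fixes a b :: real
  assumes h: "\<And>t. t > 0 \<Longrightarrow> 0 \<le> 2*t*a + t^2*b" and b: "b \<ge> 0"
  shows "a \<ge> 0"
proof (rule ccontr)
  assume "\<not> a \<ge> 0" hence a: "a < 0" by simp
  define t where "t = -a/(b+1)"
  have t: "t > 0" unfolding t_def using a b by (intro divide_pos_pos) auto
  have "t*b \<le> -a" unfolding t_def using a b by (simp add: field_simps)
  hence "2*a + t*b < 0" using a by simp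
  hence "t*(2*a + t*b) < 0" using t by (simp add: mult_pos_neg)
  moreover have "t*(2*a+t*b) = 2*t*a + t^2*b" by (simp add: power2_eq_square algebra_simps)
  ultimately show False using h[OF t] by simp
qed

lemma pos_lemma:
  assumes B: "bilinear_form_on D E" and V: "vector_lattice_of_bounded_functions D"
    and U: "unit_contraction_operates D E"
    and f: "f \<in> Dplus D" and phi: "\<phi> \<in> Eset D f"
  shows "E f \<phi> \<ge> 0"
proof -
  have fD: "f \<in> D" and f0: "\<And>x. 0 \<le> f x" using f unfolding Dplus_def by auto
  have pD: "\<phi> \<in> D" and pb: "\<And>x. indicator {y. f y > 0} x \<le> \<phi> x \<and> \<phi> x \<le> (1::real)"
    using phi unfolding Eset_def by auto
  show ?thesis
  proof (rule real_aux[where b = "E f f"])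
    fix t :: real assume t: "t > 0"
    let ?u = "\<lambda>x. \<phi> x + t * f x"
    have uD: "?u \<in> D" using vl_lin[OF V pD fD] .
    have c: "(\<lambda>x. unit_contraction (?u x)) = \<phi>"
    proof
      fix x
      show "unit_contraction (?u x) = \<phi> x"
      proof (cases "f x > 0")
        case True
        then have "\<phi> x = 1" using pb[of x] by (simp add: indicator_def)
        moreover have "t * f x \<ge> 0" using t f0[of x] by simp
        ultimately show ?thesis unfolding unit_contraction_def by simp
      next
        case False
        then have "f x = 0" using f0[of x] by simp
        moreover have "0 \<le> \<phi> x" "\<phi> x \<le> 1" using pb[of x] False by (auto simp: indicator_def)
        ultimately show ?thesis unfolding unit_contraction_def by simp
      qed
    qed
    have "E (\<lambda>x. unit_contraction (?u x)) (\<lambda>x. unit_contraction (?u x)) \<le> E ?u ?u"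
      using bspec[OF U[unfolded unit_contraction_operates_def] uD] by simp
    hence "E \<phi> \<phi> \<le> E ?u ?u" unfolding c .
    also have "\<dots> = E \<phi> \<phi> + 2*t*E \<phi> f + t^2*E f f" using quad[OF B V pD fD] .
    finally show "0 \<le> 2*t*E f \<phi> + t^2*E f f" using bl(1)[OF B pD fD] by simp
  qed (use bl(4)[OF B fD] in simp)
qed

lemma neg_lemma:
  assumes B: "bilinear_form_on D E" and V: "vector_lattice_of_bounded_functions D"
    and U: "unit_contraction_operates D E"
    and f: "f \<in> Dplus D" and hD: "h \<in> D" and h0: "\<And>x. 0 \<le> h x"
    and hz: "\<And>x. f x > 0 \<Longrightarrow> h x = 0"
  shows "E f h \<le> 0"
proof -
  have fD: "f \<in> D" and f0: "\<And>x. 0 \<le> f x" using f unfolding Dplus_def by auto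
  obtain Bd where Bd: "\<And>x. \<bar>f x\<bar> \<le> Bd" using vl(4)[OF V fD] by blast
  define c where "c = 1/(Bd+1)"
  have Bd0: "Bd \<ge> 0" using Bd[of undefined] by simp
  have c0: "c > 0" unfolding c_def using Bd0 by simp
  define a where "a = (\<lambda>x. c * f x)"
  have aD: "a \<in> D" unfolding a_def using vl(2)[OF V fD] .
  have a1: "a x < 1" for x
  proof -
    have "f x < Bd + 1" using Bd[of x] by simp
    then show ?thesis unfolding a_def c_def using Bd0 by (simp add: field_simps)
  qed
  have a0: "a x \<ge> 0" for x unfolding a_def using c0 f0[of x] by simp
  have "- E a h \<ge> 0"
  proof (rule real_aux[where b = "E h h"])
    fix t :: real assume t: "t > 0"
    let ?w = "\<lambda>x. a x + (-t) * h x"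
    have wD: "?w \<in> D" using vl_lin[OF V aD hD] .
    have cc: "(\<lambda>x. unit_contraction (?w x)) = a"
    proof
      fix x
      show "unit_contraction (?w x) = a x"
      proof (cases "f x > 0")
        case True
        then show ?thesis using hz[OF True] a0[of x] a1[of x] unfolding unit_contraction_def by simp
      next
        case False
        then have "f x = 0" using f0[of x] by simp
        then have "a x = 0" unfolding a_def by simp
        moreover have "t * h x \<ge> 0" using t h0[of x] by simp
        ultimately show ?thesis unfolding unit_contraction_def by simp
      qed
    qed
    have "E (\<lambda>x. unit_contraction (?w x)) (\<lambda>x. unit_contraction (?w x)) \<le> E ?w ?w"
      using bspec[OF U[unfolded unit_contraction_operates_def] wD] by simp
    hence "E a a \<le> E ?w ?w" unfolding cc .
    also have "\<dots> = E a a + 2*(-t)*E a h + (-t)^2*E h h" using quad[OF B V aD hD] .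
    finally show "0 \<le> 2*t*(- E a h) + t^2*E h h" by simp
  qed (use bl(4)[OF B hD] in simp)
  moreover have "E a h = c * E f h" unfolding a_def using bl(3)[OF B fD hD] .
  ultimately show ?thesis using c0 by (simp add: mult_le_0_iff)
qed

lemma cInf_scale:
  fixes S :: "real set"
  assumes c: "c > 0" and ne: "S \<noteq> {}" and bb: "bdd_below S"
  shows "Inf ((\<lambda>x. c*x) ` S) = c * Inf S"
proof (rule antisym)
  have bb2: "bdd_below ((\<lambda>x. c*x) ` S)"
  proof -
    obtain m where m: "\<And>x. x \<in> S \<Longrightarrow> m \<le> x" using bb unfolding bdd_below_def by blast
    show ?thesis unfolding bdd_below_def using m c by (auto intro!: exI[of _ "c*m"])
  qed
  have "Inf ((\<lambda>x. c*x) ` S) / c \<le> Inf S"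
  proof (rule cInf_greatest[OF ne])
    fix x assume "x \<in> S"
    then have "Inf ((\<lambda>x. c*x) ` S) \<le> c*x" using cInf_lower[OF _ bb2] by blast
    then show "Inf ((\<lambda>x. c*x) ` S) / c \<le> x" using c by (simp add: field_simps)
  qed
  then show "Inf ((\<lambda>x. c*x) ` S) \<le> c * Inf S" using c by (simp add: field_simps)
  show "c * Inf S \<le> Inf ((\<lambda>x. c*x) ` S)"
  proof (rule cInf_greatest)
    show "(\<lambda>x. c*x) ` S \<noteq> {}" using ne by simp
    fix y assume "y \<in> (\<lambda>x. c*x) ` S"
    then obtain x where x: "x \<in> S" "y = c*x" by blast
    have "Inf S \<le> x" using cInf_lower[OF x(1) bb] .
    then show "c * Inf S \<le> y" using x(2) c by simp
  qed
qed

lemma Eset_sub: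
  fixes f g :: "'a \<Rightarrow> real"
  assumes p: "\<phi> \<in> Eset D (\<lambda>x. f x + g x)" and f0: "\<And>x. 0 \<le> f x" and g0: "\<And>x. 0 \<le> g x"
  shows "\<phi> \<in> Eset D f"
proof -
  have pD: "\<phi> \<in> D" and h: "\<And>x. indicator {y. f y + g y > 0} x \<le> \<phi> x \<and> \<phi> x \<le> (1::real)"
    using p unfolding Eset_def by auto
  have "indicator {y. f y > 0} x \<le> \<phi> x \<and> \<phi> x \<le> (1::real)" for x
  proof (cases "f x > 0")
    case True
    then have "f x + g x > 0" using g0[of x] by simp
    then show ?thesis using h[of x] True by (simp add: indicator_def)
  next
    case False
    have "0 \<le> (indicator {y. f y + g y > 0} x :: real)" by (simp add: indicator_def)
    then show ?thesis using h[of x] False by (cases "f x + g x > 0") (auto simp: indicator_def)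
  qed
  then show ?thesis using pD unfolding Eset_def by auto
qed

lemma Eset_sub2:
  fixes f g :: "'a \<Rightarrow> real"
  assumes p: "\<phi> \<in> Eset D (\<lambda>x. f x + g x)" and f0: "\<And>x. 0 \<le> f x" and g0: "\<And>x. 0 \<le> g x"
  shows "\<phi> \<in> Eset D g"
proof -
  have "(\<lambda>x. f x + g x) = (\<lambda>x. g x + f x)" by (simp add: add.commute)
  then show ?thesis using Eset_sub[of \<phi> D g f] p f0 g0 by simp
qed

theorem lemmaL:
  fixes D :: "('a \<Rightarrow> real) set"
    and E :: "('a \<Rightarrow> real) \<Rightarrow> ('a \<Rightarrow> real) \<Rightarrow> real"
  assumes "vector_lattice_of_bounded_functions D"
    and "stone_property D"
    and "bilinear_form_on D E"
    and "unit_contraction_operates D E"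
  shows "(\<forall>f\<in>D0plus D. \<forall>g\<in>D0plus D. (\<lambda>x. f x + g x) \<in> D0plus D)
       \<and> (\<forall>f\<in>D0plus D. \<forall>c::real. c > 0 \<longrightarrow> (\<lambda>x. c * f x) \<in> D0plus D)
       \<and> (\<forall>f\<in>D0plus D. bdd_below ((\<lambda>\<phi>. E f \<phi>) ` Eset D f) \<and> 0 \<le> Kfun D E f)
       \<and> (\<forall>f\<in>D0plus D. \<forall>g\<in>D0plus D.
            Kfun D E (\<lambda>x. f x + g x) = Kfun D E f + Kfun D E g)
       \<and> (\<forall>f\<in>D0plus D. \<forall>c::real. c > 0 \<longrightarrow> Kfun D E (\<lambda>x. c * f x) = c * Kfun D E f)"
proof -
  note V = assms(1) and B = assms(3) and U = assms(4)
  have D0: "f \<in> D" "\<And>x. 0 \<le> f x" "Eset D f \<noteq> {}" if "f \<in> D0plus D" for f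
    using that unfolding D0plus_def Dplus_def by auto
  have Dp: "f \<in> Dplus D" if "f \<in> D0plus D" for f using that unfolding D0plus_def by auto
  have nn: "\<And>\<phi>. \<phi> \<in> Eset D f \<Longrightarrow> 0 \<le> E f \<phi>" if "f \<in> D0plus D" for f
    using pos_lemma[OF B V U Dp[OF that]] by blast
  have bb: "bdd_below ((\<lambda>\<phi>. E f \<phi>) ` Eset D f)" if "f \<in> D0plus D" for f
    unfolding bdd_below_def using nn[OF that] by blast
  have K0: "0 \<le> Kfun D E f" if "f \<in> D0plus D" for f
    unfolding Kfun_def using D0(3)[OF that] nn[OF that] by (auto intro!: cInf_greatest)
  have Klow: "Kfun D E f \<le> E f \<phi>" if "f \<in> D0plus D" "\<phi> \<in> Eset D f" for f \<phi>
    unfolding Kfun_def using cInf_lower[OF _ bb[OF that(1)]] that(2) by blast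
  have Kgr: "m \<le> Kfun D E f" if "f \<in> D0plus D" "\<And>\<phi>. \<phi> \<in> Eset D f \<Longrightarrow> m \<le> E f \<phi>" for f m
    unfolding Kfun_def using D0(3)[OF that(1)] that(2) by (auto intro!: cInf_greatest)
  have maxE: "(\<lambda>x. max (\<phi> x) (\<psi> x)) \<in> Eset D (\<lambda>x. f x + g x)"
    if "f \<in> D0plus D" "g \<in> D0plus D" "\<phi> \<in> Eset D f" "\<psi> \<in> Eset D g" for f g \<phi> \<psi>
  proof -
    have p: "\<phi> \<in> D" "\<And>x. indicator {y. f y > 0} x \<le> \<phi> x \<and> \<phi> x \<le> (1::real)"
      using that(3) unfolding Eset_def by auto
    have q: "\<psi> \<in> D" "\<And>x. indicator {y. g y > 0} x \<le> \<psi> x \<and> \<psi> x \<le> (1::real)"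
      using that(4) unfolding Eset_def by auto
    have "indicator {y. f y + g y > 0} x \<le> max (\<phi> x) (\<psi> x) \<and> max (\<phi> x) (\<psi> x) \<le> (1::real)" for x
    proof -
      have "0 \<le> f x" "0 \<le> g x" using D0(2)[OF that(1)] D0(2)[OF that(2)] by auto
      moreover have "indicator {y. f y > 0} x \<le> \<phi> x" "\<phi> x \<le> 1" using p(2)[of x] by auto
      moreover have "indicator {y. g y > 0} x \<le> \<psi> x" "\<psi> x \<le> 1" using q(2)[of x] by auto
      ultimately show ?thesis unfolding indicator_def
        by (cases "f x > 0"; cases "g x > 0") (auto simp: max_def)
    qed
    then show ?thesis using vl(3)[OF V p(1) q(1)] unfolding Eset_def by auto
  qed
  have mono: "E f \<chi> \<le> E f \<phi>" if "f \<in> D0plus D" "\<phi> \<in> Eset D f" "\<chi> \<in> Eset D f"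
    "\<And>x. \<phi> x \<le> \<chi> x" for f \<phi> \<chi>
  proof -
    have pD: "\<phi> \<in> D" and cD: "\<chi> \<in> D" using that(2,3) unfolding Eset_def by auto
    define h where "h = (\<lambda>x. \<chi> x + (-1) * \<phi> x)"
    have hD: "h \<in> D" unfolding h_def using vl_lin[OF V cD pD] .
    have hz: "h x = 0" if "f x > 0" for x
    proof -
      have b1: "indicator {y. f y > 0} x \<le> \<phi> x \<and> \<phi> x \<le> (1::real)"
        using \<open>\<phi> \<in> Eset D f\<close> unfolding Eset_def by blast
      have b2: "indicator {y. f y > 0} x \<le> \<chi> x \<and> \<chi> x \<le> (1::real)"
        using \<open>\<chi> \<in> Eset D f\<close> unfolding Eset_def by blast
      have a1: "1 \<le> \<phi> x" "\<phi> x \<le> 1" "1 \<le> \<chi> x" "\<chi> x \<le> 1"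
        using b1 b2 that by (auto simp: indicator_def)
      hence "\<phi> x = 1" "\<chi> x = 1" by auto
      then show ?thesis unfolding h_def by simp
    qed
    have h0: "0 \<le> h x" for x unfolding h_def using that(4)[of x] by simp
    have "E f h \<le> 0" using neg_lemma[OF B V U Dp[OF that(1)] hD h0 hz] .
    moreover have "E f h = E f \<chi> - E f \<phi>"
    proof -
      have mD: "(\<lambda>x. (-1) * \<phi> x) \<in> D" using vl(2)[OF V pD] .
      have "E h f = E \<chi> f + E (\<lambda>x. (-1) * \<phi> x) f" unfolding h_def
        using bl(2)[OF B cD mD D0(1)[OF that(1)]] by simp
      also have "E (\<lambda>x. (-1) * \<phi> x) f = - E \<phi> f" using bl(3)[OF B pD D0(1)[OF that(1)], of "-1"] by simp
      finally show ?thesis using bl(1)[OF B D0(1)[OF that(1)]] hD cD pD by simp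
    qed
    ultimately show ?thesis by simp
  qed
  have add: "(\<lambda>x. f x + g x) \<in> D0plus D" if f: "f \<in> D0plus D" and g: "g \<in> D0plus D" for f g
  proof -
    obtain \<phi> \<psi> where "\<phi> \<in> Eset D f" "\<psi> \<in> Eset D g" using D0(3)[OF f] D0(3)[OF g] by blast
    then show ?thesis using maxE[OF f g] vl(1)[OF V D0(1)[OF f] D0(1)[OF g]]
      D0(2)[OF f] D0(2)[OF g] unfolding D0plus_def Dplus_def
      by (auto intro: add_nonneg_nonneg)
  qed
  have EsetS: "Eset D (\<lambda>x. c * f x) = Eset D f" if "c > 0" for c and f :: "'a \<Rightarrow> real"
  proof -
    have "{y. c * f y > 0} = {y. f y > 0}" using that by (auto simp: zero_less_mult_iff)
    then show ?thesis unfolding Eset_def by simp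
  qed
  have scl: "(\<lambda>x. c * f x) \<in> D0plus D" if "f \<in> D0plus D" "c > 0" for f c
    using that D0[OF that(1)] vl(2)[OF V D0(1)[OF that(1)]] EsetS[OF that(2)]
    unfolding D0plus_def Dplus_def by auto
  have Kadd: "Kfun D E (\<lambda>x. f x + g x) = Kfun D E f + Kfun D E g"
    if f: "f \<in> D0plus D" and g: "g \<in> D0plus D" for f g
  proof (rule antisym)
    have fg: "(\<lambda>x. f x + g x) \<in> D0plus D" using add[OF f g] .
    have L: "Kfun D E (\<lambda>x. f x + g x) - E g \<psi> \<le> Kfun D E f" if psi: "\<psi> \<in> Eset D g" for \<psi>
    proof (rule Kgr[OF f])
      fix \<phi> assume phi: "\<phi> \<in> Eset D f"
      let ?m = "\<lambda>x. max (\<phi> x) (\<psi> x)"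
      have mE: "?m \<in> Eset D (\<lambda>x. f x + g x)" using maxE[OF f g phi psi] .
      have mD: "?m \<in> D" using mE unfolding Eset_def by auto
      have mf: "?m \<in> Eset D f" using Eset_sub[OF mE D0(2)[OF f] D0(2)[OF g]] .
      have mg: "?m \<in> Eset D g" using Eset_sub2[OF mE D0(2)[OF f] D0(2)[OF g]] .
      have "Kfun D E (\<lambda>x. f x + g x) \<le> E (\<lambda>x. f x + g x) ?m" using Klow[OF fg mE] .
      also have "\<dots> = E f ?m + E g ?m" using bl(2)[OF B D0(1)[OF f] D0(1)[OF g] mD] .
      also have "E f ?m \<le> E f \<phi>" using mono[OF f phi mf] by simp
      also have "E g ?m \<le> E g \<psi>" using mono[OF g psi mg] by simp
      finally show "Kfun D E (\<lambda>x. f x + g x) - E g \<psi> \<le> E f \<phi>" by simp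
    qed
    have "Kfun D E (\<lambda>x. f x + g x) - Kfun D E f \<le> Kfun D E g"
      by (rule Kgr[OF g]) (use L in fastforce)
    then show "Kfun D E (\<lambda>x. f x + g x) \<le> Kfun D E f + Kfun D E g" by simp
    show "Kfun D E f + Kfun D E g \<le> Kfun D E (\<lambda>x. f x + g x)"
    proof (rule Kgr[OF fg])
      fix \<phi> assume phi: "\<phi> \<in> Eset D (\<lambda>x. f x + g x)"
      have pD: "\<phi> \<in> D" using phi unfolding Eset_def by auto
      have pf: "\<phi> \<in> Eset D f" using Eset_sub[OF phi D0(2)[OF f] D0(2)[OF g]] .
      have pg: "\<phi> \<in> Eset D g" using Eset_sub2[OF phi D0(2)[OF f] D0(2)[OF g]] .
      have "E (\<lambda>x. f x + g x) \<phi> = E f \<phi> + E g \<phi>" using bl(2)[OF B D0(1)[OF f] D0(1)[OF g] pD] .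
      then show "Kfun D E f + Kfun D E g \<le> E (\<lambda>x. f x + g x) \<phi>"
        using Klow[OF f pf] Klow[OF g pg] by simp
    qed
  qed
  have Kscl: "Kfun D E (\<lambda>x. c * f x) = c * Kfun D E f" if f: "f \<in> D0plus D" and c: "c > 0" for f c
  proof -
    have "(\<lambda>\<phi>. E (\<lambda>x. c * f x) \<phi>) ` Eset D (\<lambda>x. c * f x) = (\<lambda>x. c*x) ` ((\<lambda>\<phi>. E f \<phi>) ` Eset D f)"
      unfolding EsetS[OF c] image_image
      by (rule image_cong) (auto simp: Eset_def intro!: bl(3)[OF B D0(1)[OF f]])
    then show ?thesis unfolding Kfun_def
      using cInf_scale[OF c _ bb[OF f]] D0(3)[OF f] by simp
  qed
  show ?thesis
  proof (intro conjI ballI allI impI)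
    show "(\<lambda>x. f x + g x) \<in> D0plus D" if "f \<in> D0plus D" "g \<in> D0plus D" for f g using add[OF that] .
    show "(\<lambda>x. c * f x) \<in> D0plus D" if "f \<in> D0plus D" "c > 0" for f c using scl[OF that] .
    show "bdd_below ((\<lambda>\<phi>. E f \<phi>) ` Eset D f)" if "f \<in> D0plus D" for f using bb[OF that] .
    show "0 \<le> Kfun D E f" if "f \<in> D0plus D" for f using K0[OF that] .
    show "Kfun D E (\<lambda>x. f x + g x) = Kfun D E f + Kfun D E g" if "f \<in> D0plus D" "g \<in> D0plus D" for f g
      using Kadd[OF that] .
    show "Kfun D E (\<lambda>x. c * f x) = c * Kfun D E f" if "f \<in> D0plus D" "c > 0" for f c using Kscl[OF that] .
  qed
qed

end
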